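(* Let $k\ge 1$ and $n\ge 1$ be integers. If the odd cycle $C_{2n+1}$ is a strict prime $k$th-power distance graph, then so is every larger odd cycle $C_{2(n+j)+1}$, $j\ge 1$.
   Context: A graph $G$ is a strict prime $k$th-power distance graph if there is an injective map $L:V(G)\to\mathbb{Z}$ such that for every edge $uv$ of $G$, $|L(u)-L(v)|=p^k$ for some prime $p$ (the prime may depend on the edge). *)

theory Defs
  imports "HOL-Computational_Algebra.Primes"
begin

definition strict_prime_power_distance_graph :: "nat \<Rightarrow> 'a set \<Rightarrow> 'a set set \<Rightarrow> bool" where
  "strict_prime_power_distance_graph k V E \<longleftrightarrow>
     (\<exists>L :: 'a \<Rightarrow> int. inj_on L V \<and>
        (\<forall>u\<in>V. \<forall>v\<in>V. {u, v} \<in> E \<longrightarrow> (\<exists>p :: nat. prime p \<and> \<bar>L u - L v\<bar> = int p ^ k)))"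

text \<open>The cycle C_m on vertices 0,...,m-1 with edges {i, i+1 mod m} (meant for m >= 3).\<close>

definition cycle_vertices :: "nat \<Rightarrow> nat set" where
  "cycle_vertices m = {0..<m}"

definition cycle_edges :: "nat \<Rightarrow> nat set set" where
  "cycle_edges m = {{i, (i + 1) mod m} | i. i < m}"

end

theory Submission
  imports Defs
begin

lemma absmul_ge: "(x::int) \<noteq> 0 \<Longrightarrow> (D::int) > 0 \<Longrightarrow> \<bar>x * D\<bar> \<ge> D"
proof -
  assume "x \<noteq> 0" "D > 0"
  hence "\<bar>x\<bar> \<ge> 1" by simp
  hence "\<bar>x\<bar> * D \<ge> 1 * D" using \<open>D>0\<close> by (intro mult_right_mono) auto
  thus ?thesis using \<open>D>0\<close> by (simp add: abs_mult)
qed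

theorem mainTheorem13:
  fixes k n j :: nat
  assumes "k \<ge> 1" and "n \<ge> 1" and "j \<ge> 1"
    and "strict_prime_power_distance_graph k (cycle_vertices (2*n+1)) (cycle_edges (2*n+1))"
  shows "strict_prime_power_distance_graph k (cycle_vertices (2*(n+j)+1)) (cycle_edges (2*(n+j)+1))"
proof -
  define m where "m = 2*n+1"
  define M where "M = 2*(n+j)+1"
  obtain L where inj: "inj_on L {0..<m}" and
    ed: "\<forall>u\<in>{0..<m}. \<forall>v\<in>{0..<m}. {u, v} \<in> cycle_edges m \<longrightarrow> (\<exists>p :: nat. prime p \<and> \<bar>L u - L v\<bar> = int p ^ k)"
    using assms(4) unfolding strict_prime_power_distance_graph_def cycle_vertices_def m_def by blast
  have old1: "\<exists>p::nat. prime p \<and> \<bar>L i - L (i+1)\<bar> = int p ^ k" if "i < 2*n" for i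
  proof -
    have "{i, i+1} \<in> cycle_edges m" unfolding cycle_edges_def m_def using that
      by (intro CollectI exI[of _ i]) auto
    thus ?thesis using ed that m_def by auto
  qed
  have old2: "\<exists>p::nat. prime p \<and> \<bar>L (2*n) - L 0\<bar> = int p ^ k"
  proof -
    have "{2*n, 0} \<in> cycle_edges m" unfolding cycle_edges_def m_def
      by (intro CollectI exI[of _ "2*n"]) auto
    thus ?thesis using ed m_def by auto
  qed
  define B where "B = Max ((\<lambda>v. \<bar>L v\<bar>) ` {0..<m})"
  have Bge: "\<bar>L v\<bar> \<le> B" if "v < m" for v
    unfolding B_def using that by (intro Max_ge) auto
  obtain q where q: "prime q" "q > nat (2*B+1)" using bigger_prime by blast
  define D :: int where "D = int q ^ k"
  have "int q \<le> int q ^ k" using assms(1) q(1) prime_gt_0_nat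
    by (metis of_nat_le_iff of_nat_power self_le_power not_one_le_zero le_zero_eq not_less prime_ge_1_nat) 
  hence Dbig: "D > 2*B+1" using q(2) D_def by linarith
  have Dpos: "D > 0" using Dbig Bge[of 0] m_def by force
  have close: "\<bar>L u - L w\<bar> < D" if "u < m" "w < m" for u w
    using Bge[OF that(1)] Bge[OF that(2)] Dbig by linarith
  have prD: "\<exists>p::nat. prime p \<and> D = int p ^ k" using q D_def by blast
  define L' where "L' v = (if v \<le> 2*n then L v else if v \<le> 2*n+j then L (2*n) + int (v - 2*n) * D
                         else L 0 + int (M - v) * D)" for v
  have n0: "2*n \<noteq> 0" using assms(2) by simp
  have inj': "inj_on L' {0..<M}"
  proof (rule inj_onI)
    fix u w assume u: "u \<in> {0..<M}" and w: "w \<in> {0..<M}" and eq: "L' u = L' w"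
    consider "u \<le> 2*n" | "2*n < u" "u \<le> 2*n+j" | "2*n+j < u" by linarith
    note cu = this
    consider "w \<le> 2*n" | "2*n < w" "w \<le> 2*n+j" | "2*n+j < w" by linarith
    note cw = this
    have A: False if "a \<le> 2*n" "2*n < b" "b \<le> 2*n+j" "L' a = L' b" for a b
    proof -
      have "L a - L (2*n) = int (b - 2*n) * D" using that unfolding L'_def by auto
      moreover have "\<bar>int (b - 2*n) * D\<bar> \<ge> D" using that Dpos by (intro absmul_ge) auto
      moreover have "\<bar>L a - L (2*n)\<bar> < D" using that m_def by (intro close) auto
      ultimately show False by linarith
    qed
    have Bc: False if "a \<le> 2*n" "2*n+j < b" "b < M" "L' a = L' b" for a b
    proof -
      have "L a - L 0 = int (M - b) * D" using that unfolding L'_def by auto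
      moreover have "\<bar>int (M - b) * D\<bar> \<ge> D" using that Dpos by (intro absmul_ge) auto
      moreover have "\<bar>L a - L 0\<bar> < D" using that m_def by (intro close) auto
      ultimately show False by linarith
    qed
    have C: False if "2*n < a" "a \<le> 2*n+j" "2*n+j < b" "b < M" "L' a = L' b" for a b
    proof -
      have e: "L (2*n) - L 0 = (int (M - b) - int (a - 2*n)) * D" using that unfolding L'_def
        by (auto simp: algebra_simps)
      have "L (2*n) \<noteq> L 0" using inj n0 m_def by (auto dest: inj_onD)
      hence "int (M - b) - int (a - 2*n) \<noteq> 0" using e by auto
      hence "\<bar>(int (M - b) - int (a - 2*n)) * D\<bar> \<ge> D" using Dpos by (intro absmul_ge) auto
      hence g: "\<bar>L (2*n) - L 0\<bar> \<ge> D" by (simp only: e)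
      have "\<bar>L (2*n) - L 0\<bar> < D" using m_def by (intro close) auto
      thus False using g by simp
    qed
    show "u = w"
    proof (cases rule: cu)
      case 1
      then show ?thesis
      proof (cases rule: cw)
        case 1
        then show ?thesis using eq u w inj m_def \<open>u \<le> 2*n\<close> unfolding L'_def by (auto dest: inj_onD)
      next
        case 2 then show ?thesis using A[of u w] 1 eq by auto
      next
        case 3 then show ?thesis using Bc[of u w] 1 eq w by auto
      qed
    next
      case 2
      then show ?thesis
      proof (cases rule: cw)
        case 1 then show ?thesis using A[of w u] 2 eq by auto
      next
        case 3 then show ?thesis using C[of u w] 2 eq w by auto
      next
        case c2: 2
        have "int (u - 2*n) * D = int (w - 2*n) * D" using eq 2 c2 unfolding L'_def by auto
        hence "u - 2*n = w - 2*n" using Dpos by simp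
        then show ?thesis using 2 c2 by linarith
      qed
    next
      case 3
      then show ?thesis
      proof (cases rule: cw)
        case 1 then show ?thesis using Bc[of w u] 3 eq u by auto
      next
        case 2 then show ?thesis using C[of w u] 3 eq u by auto
      next
        case c3: 3
        have "int (M - u) * D = int (M - w) * D" using eq 3 c3 unfolding L'_def by auto
        hence "M - u = M - w" using Dpos by simp
        then show ?thesis using 3 c3 u w by auto
      qed
    qed
  qed
  have step: "\<exists>p::nat. prime p \<and> \<bar>L' i - L' ((i+1) mod M)\<bar> = int p ^ k" if iM: "i < M" for i
  proof -
    consider "i < 2*n" | "i = 2*n" | "2*n < i" "i < 2*n+j" | "i = 2*n+j" | "2*n+j < i" "i < M - 1"
      | "i = M - 1" using iM M_def by linarith
    then show ?thesis
    proof cases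
      case 1
      hence "(i+1) mod M = i+1" using M_def by auto
      then show ?thesis using old1[OF 1] 1 unfolding L'_def by auto
    next
      case 2
      hence "(i+1) mod M = i+1" using M_def assms(3) by auto
      then show ?thesis using prD 2 assms(3) Dpos unfolding L'_def by auto
    next
      case 3
      hence "(i+1) mod M = i+1" using M_def by auto
      moreover have "L' i - L' (i+1) = - D" using 3 unfolding L'_def
        by (auto simp: algebra_simps of_nat_diff Suc_diff_le)
      ultimately show ?thesis using prD Dpos by auto
    next
      case 4
      hence "(i+1) mod M = i+1" using M_def assms(3) by auto
      moreover have "M - (i+1) = j" "i - 2*n = j" using 4 M_def by auto
      moreover have "\<not> i+1 \<le> 2*n+j" "\<not> i \<le> 2*n" using 4 assms(3) by auto
      ultimately have "L' i - L' ((i+1) mod M) = L (2*n) - L 0" using 4 unfolding L'_def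
        by auto
      then show ?thesis using old2 by auto
    next
      case 5
      hence "(i+1) mod M = i+1" using M_def by auto
      moreover have "int (M - i) = int (M - (i+1)) + 1" using 5 by auto
      ultimately have "L' i - L' ((i+1) mod M) = D" using 5 unfolding L'_def
        by (auto simp: algebra_simps)
      then show ?thesis using prD by auto
    next
      case 6
      hence "(i+1) mod M = 0" using M_def by auto
      moreover have "M - i = 1" "\<not> i \<le> 2*n+j" using 6 M_def assms(3) by auto
      ultimately have "L' i - L' ((i+1) mod M) = D" unfolding L'_def by auto
      then show ?thesis using prD by auto
    qed
  qed
  show ?thesis
    unfolding strict_prime_power_distance_graph_def cycle_vertices_def
  proof (intro exI[of _ L'] conjI ballI impI)
    show "inj_on L' {0..<2 * (n + j) + 1}" using inj' M_def by simp
  next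
    fix u v assume "{u, v} \<in> cycle_edges (2 * (n + j) + 1)"
    then obtain i where i: "i < M" "{u, v} = {i, (i+1) mod M}"
      unfolding cycle_edges_def M_def by auto
    hence "(u = i \<and> v = (i+1) mod M) \<or> (u = (i+1) mod M \<and> v = i)"
      by (auto simp: doubleton_eq_iff)
    thus "\<exists>p::nat. prime p \<and> \<bar>L' u - L' v\<bar> = int p ^ k"
      using step[OF i(1)] by (auto simp: abs_minus_commute)
  qed
qed

end
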